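(* Let $X$ be a random variable taking values in $\mathbb{R}_+$, and let $\mathbf{J}\in\mathbb{C}^{n\times n}$ be a Jordan block with eigenvalue $\lambda$, $\Re(\lambda)>0$. For $j\in\{1,\dots,n\}$ let $Z_j\sim\mathrm{Erlang}(j,\Re(\lambda))$ be independent of $X$, and let $Z_0=0$. Then for each $j\in\{1,\dots,n\}$, $$\big|\boldsymbol{\mathcal{L}}_X(\mathbf{J})_{1,j}\big|\le\Re(\lambda)^{1-j}\max\big(\mathbb{P}(Z_j>X),\mathbb{P}(Z_{j-1}>X)\big)\le\Re(\lambda)^{1-j}.$$
   Context: $\boldsymbol{\mathcal{L}}_X(\mathbf{J})=\mathbb{E}[\exp(-\mathbf{J}X)]$ (entrywise expectation of the matrix exponential). A Jordan block with eigenvalue $\lambda$ has $\lambda$ on the diagonal, ones on the first superdiagonal and zeros elsewhere. Erlang$(j,\mu)$ is the distribution of a sum of $j$ i.i.d. exponential random variables with rate $\mu$. *)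

theory Defs
  imports "HOL-Probability.Probability" "Jordan_Normal_Form.Jordan_Normal_Form"
begin

definition mat_exp :: "complex mat \<Rightarrow> complex mat" where
  "mat_exp A = mat (dim_row A) (dim_col A)
     (\<lambda>(i,j). \<Sum>k. (A ^\<^sub>m k) $$ (i,j) / of_nat (fact k))"

definition mat_laplace :: "'a measure \<Rightarrow> ('a \<Rightarrow> real) \<Rightarrow> complex mat \<Rightarrow> complex mat" where
  "mat_laplace M X J = mat (dim_row J) (dim_col J)
     (\<lambda>(i,j). integral\<^sup>L M (\<lambda>\<omega>. mat_exp ((- complex_of_real (X \<omega>)) \<cdot>\<^sub>m J) $$ (i,j)))"

end

theory Submission
  imports Defs
begin

lemma smult_pow_mat:
  fixes A :: "complex mat"
  assumes "A \<in> carrier_mat n n"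
  shows "(c \<cdot>\<^sub>m A) ^\<^sub>m k = (c ^ k) \<cdot>\<^sub>m (A ^\<^sub>m k)"
proof (induct k)
  case 0
  then show ?case using assms by (auto intro!: eq_matI)
next
  case (Suc k)
  have "(c \<cdot>\<^sub>m A) ^\<^sub>m Suc k = ((c ^ k) \<cdot>\<^sub>m (A ^\<^sub>m k)) * (c \<cdot>\<^sub>m A)" using Suc by simp
  also have "\<dots> = (c ^ k) \<cdot>\<^sub>m (A ^\<^sub>m k * (c \<cdot>\<^sub>m A))"
    using mult_smult_assoc_mat[OF pow_carrier_mat[OF assms] smult_carrier_mat[OF assms]] by simp
  also have "\<dots> = (c ^ k) \<cdot>\<^sub>m (c \<cdot>\<^sub>m (A ^\<^sub>m k * A))"
    using mult_smult_distrib[OF pow_carrier_mat[OF assms] assms] by simp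
  also have "\<dots> = (c ^ Suc k) \<cdot>\<^sub>m (A ^\<^sub>m k * A)"
    by (rule eq_matI) auto
  finally show ?case by simp
qed

lemma entry_jb:
  fixes x :: real and l :: complex
  assumes "m < n"
  shows "mat_exp ((- complex_of_real x) \<cdot>\<^sub>m jordan_block n l) $$ (0, m)
     = exp (- complex_of_real x * l) * (- complex_of_real x) ^ m / fact m"
proof -
  let ?c = "- complex_of_real x"
  have e: "((?c \<cdot>\<^sub>m jordan_block n l) ^\<^sub>m k) $$ (0, m) = ?c ^ k * of_nat (k choose m) * l ^ (k - m)" for k
    using assms by (simp add: smult_pow_mat[of _ n] jordan_block_pow)
  have "(\<lambda>i. (?c * l) ^ i / fact i) sums exp (?c * l)"
    using exp_converges[of "?c * l"] by (simp add: scaleR_conv_of_real divide_inverse mult.commute)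
  then have S: "(\<lambda>i. ?c ^ m / fact m * ((?c * l) ^ i / fact i)) sums (?c ^ m / fact m * exp (?c * l))"
    by (rule sums_mult)
  have Q: "?c ^ m / fact m * ((?c * l) ^ i / fact i) =
     ?c ^ (i + m) * of_nat ((i + m) choose m) * l ^ (i + m - m) / fact (i + m)" for i
  proof -
    have N: "fact m * fact i * ((i+m) choose m) = (fact (i+m) :: nat)"
      using binomial_fact_lemma[of m "i+m"] by simp
    have "(fact (i+m)::complex) = of_nat (fact (i+m))" by simp
    also have "\<dots> = of_nat (fact m * fact i * ((i+m) choose m))" using N by simp
    also have "\<dots> = fact m * fact i * of_nat ((i+m) choose m)" by simp
    finally have F: "(fact (i+m)::complex) = fact m * fact i * of_nat ((i+m) choose m)" .
    have B: "(of_nat ((i+m) choose m) :: complex) \<noteq> 0" by simp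
    have P: "(?c * l) ^ i = ?c ^ i * l ^ i" by (rule power_mult_distrib)
    show ?thesis unfolding F P using B by (simp add: power_add)
  qed
  have "(\<lambda>i. ?c ^ (i + m) * of_nat ((i + m) choose m) * l ^ (i + m - m) / fact (i + m))
     sums (?c ^ m / fact m * exp (?c * l))" using S unfolding Q .
  then have "(\<lambda>k. ?c ^ k * of_nat (k choose m) * l ^ (k - m) / fact k) sums (?c ^ m / fact m * exp (?c * l))"
    by (subst (asm) sums_zero_iff_shift[where n=m]) auto
  then have "(\<lambda>k. ((?c \<cdot>\<^sub>m jordan_block n l) ^\<^sub>m k) $$ (0, m) / of_nat (fact k)) sums (?c ^ m / fact m * exp (?c * l))"
    unfolding e of_nat_fact .
  then have "(\<Sum>k. ((?c \<cdot>\<^sub>m jordan_block n l) ^\<^sub>m k) $$ (0, m) / of_nat (fact k)) = ?c ^ m / fact m * exp (?c * l)"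
    by (rule sums_unique[symmetric])
  then show ?thesis using assms unfolding mat_exp_def
    by (simp add: mult.commute)
qed
lemma erlang_CDF_meas[measurable]: "(\<lambda>x. erlang_CDF k m x) \<in> borel_measurable borel"
  unfolding erlang_CDF_def by measurable

lemma (in prob_space) prob_gt_indep:
  assumes D: "distributed M lborel Y (erlang_density k mu)" and mu: "0 < mu"
    and I: "indep_var borel X borel Y" and X0: "\<forall>\<omega>\<in>space M. 0 \<le> X \<omega>"
  shows "emeasure M {\<omega>\<in>space M. X \<omega> < Y \<omega>} = (\<integral>\<^sup>+ \<omega>. ennreal (1 - erlang_CDF k mu (X \<omega>)) \<partial>M)"
proof -
  have rX[measurable]: "X \<in> borel_measurable M" and rY[measurable]: "Y \<in> borel_measurable M"
    and eq: "distr M borel X \<Otimes>\<^sub>M distr M borel Y = distr M (borel \<Otimes>\<^sub>M borel) (\<lambda>x. (X x, Y x))"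
    using I unfolding indep_var_distribution_eq by auto
  define S where "S = {p::real\<times>real. fst p < snd p}"
  have Sm: "S \<in> sets (borel \<Otimes>\<^sub>M borel)"
  proof -
    have "{p \<in> space (borel \<Otimes>\<^sub>M borel). fst p < (snd p::real)} \<in> sets (borel \<Otimes>\<^sub>M borel)"
      by measurable
    then show ?thesis unfolding S_def by (simp add: space_pair_measure)
  qed
  interpret Yd: prob_space "distr M borel Y" by (rule prob_space_distr) simp
  have "emeasure M {\<omega>\<in>space M. X \<omega> < Y \<omega>} = emeasure (distr M (borel \<Otimes>\<^sub>M borel) (\<lambda>x. (X x, Y x))) S"
    using Sm by (subst emeasure_distr) (auto simp: S_def intro!: arg_cong[where f="emeasure M"])
  also have "\<dots> = emeasure (distr M borel X \<Otimes>\<^sub>M distr M borel Y) S" by (simp add: eq)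
  also have "\<dots> = (\<integral>\<^sup>+x. emeasure (distr M borel Y) (Pair x -` S) \<partial>distr M borel X)"
    using Sm by (intro Yd.emeasure_pair_measure_alt) simp
  also have "\<dots> = (\<integral>\<^sup>+x. ennreal (1 - erlang_CDF k mu x) \<partial>distr M borel X)"
  proof (rule nn_integral_cong_AE)
    have pt: "emeasure (distr M borel Y) (Pair x -` S) = ennreal (1 - erlang_CDF k mu x)" if x0: "0 \<le> x" for x
    proof -
      have "emeasure (distr M borel Y) (Pair x -` S) = emeasure M {w \<in> space M. x < Y w}"
        by (subst emeasure_distr) (auto simp: S_def intro!: arg_cong[where f="emeasure M"])
      also have "\<dots> = ennreal (\<P>(w in M. x < Y w))" by (simp add: emeasure_eq_measure)
      also have "\<dots> = ennreal (1 - erlang_CDF k mu x)"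
        using erlang_distributed_gt[OF D mu x0] by simp
      finally show ?thesis .
    qed
    have "AE \<omega> in M. 0 \<le> X \<omega>" using X0 by (auto intro: AE_I2)
    then have "AE x in distr M borel X. 0 \<le> x" by (subst AE_distr_iff) auto
    then show "AE x in distr M borel X. emeasure (distr M borel Y) (Pair x -` S) = ennreal (1 - erlang_CDF k mu x)"
      by (rule AE_mp) (auto intro!: AE_I2 pt)
  qed
  also have "\<dots> = (\<integral>\<^sup>+ \<omega>. ennreal (1 - erlang_CDF k mu (X \<omega>)) \<partial>M)"
    by (subst nn_integral_distr) auto
  finally show ?thesis .
qed

lemma pt_bound:
  fixes x mu :: real
  assumes x: "0 \<le> x" and mu: "0 < mu"
  shows "exp (- mu * x) * x ^ m / fact m \<le> inverse (mu ^ m) * (1 - erlang_CDF m mu x)"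
proof -
  have "(mu * x) ^ m * exp (- mu * x) / fact m \<le> (\<Sum>n\<le>m. (mu * x) ^ n * exp (- mu * x) / fact n)"
    by (rule member_le_sum[where f="\<lambda>n. (mu * x) ^ n * exp (- mu * x) / fact n"]) (use x mu in auto)
  also have "\<dots> = 1 - erlang_CDF m mu x" using x by (simp add: erlang_CDF_def)
  finally have h: "(mu * x) ^ m * exp (- mu * x) / fact m \<le> 1 - erlang_CDF m mu x" .
  have "exp (- mu * x) * x ^ m / fact m = inverse (mu ^ m) * ((mu * x) ^ m * exp (- mu * x) / fact m)"
    using mu by (simp add: power_mult_distrib field_simps)
  also have "\<dots> \<le> inverse (mu ^ m) * (1 - erlang_CDF m mu x)"
    using h mu by (intro mult_left_mono) auto
  finally show ?thesis .
qed

theorem lemma3: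
  fixes M :: "'a measure" and X :: "'a \<Rightarrow> real" and Z :: "nat \<Rightarrow> 'a \<Rightarrow> real"
    and n :: nat and l :: complex
  assumes "prob_space M"
    and "X \<in> borel_measurable M"
    and "\<forall>\<omega>\<in>space M. 0 \<le> X \<omega>"
    and "0 < Re l"
    and "\<forall>j\<in>{1..n}. distributed M lborel (Z j) (erlang_density (j - 1) (Re l))"
    and "\<forall>j\<in>{1..n}. prob_space.indep_var M borel X borel (Z j)"
    and "Z 0 = (\<lambda>_. 0)"
    and "j \<in> {1..n}"
  shows "cmod (mat_laplace M X (jordan_block n l) $$ (0, j - 1))
           \<le> Re l powi (1 - int j) *
             max (measure M {\<omega>\<in>space M. Z j \<omega> > X \<omega>})
                 (measure M {\<omega>\<in>space M. Z (j - 1) \<omega> > X \<omega>})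
       \<and> Re l powi (1 - int j) *
             max (measure M {\<omega>\<in>space M. Z j \<omega> > X \<omega>})
                 (measure M {\<omega>\<in>space M. Z (j - 1) \<omega> > X \<omega>})
         \<le> Re l powi (1 - int j)"
proof -
  interpret prob_space M by fact
  note rX[measurable] = assms(2)
  define m where "m = j - 1"
  define mu where "mu = Re l"
  have mu: "0 < mu" using assms(4) by (simp add: mu_def)
  have jm: "j = Suc m" using assms(8) by (simp add: m_def)
  have mn: "m < n" using assms(8) unfolding m_def by auto
  have D: "distributed M lborel (Z j) (erlang_density m mu)" using assms(5,8) by (simp add: m_def mu_def)
  have I: "indep_var borel X borel (Z j)" using assms(6,8) by simp
  define c where "c = inverse (mu ^ m)"
  have c0: "0 < c" using mu by (simp add: c_def)
  have cpow: "Re l powi (1 - int j) = c"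
    unfolding c_def mu_def jm using power_int_minus[of "Re l" "int m"] by simp
  define P1 where "P1 = measure M {\<omega>\<in>space M. Z j \<omega> > X \<omega>}"
  define P0 where "P0 = measure M {\<omega>\<in>space M. Z (j - 1) \<omega> > X \<omega>}"
  define f where "f = (\<lambda>\<omega>. exp (- complex_of_real (X \<omega>) * l) * (- complex_of_real (X \<omega>)) ^ m / fact m)"
  have L: "mat_laplace M X (jordan_block n l) $$ (0, j - 1) = integral\<^sup>L M f"
    using mn unfolding f_def m_def[symmetric] by (simp add: mat_laplace_def entry_jb)
  have nf: "cmod (f \<omega>) = exp (- mu * X \<omega>) * X \<omega> ^ m / fact m" if "\<omega> \<in> space M" for \<omega>
    using assms(3) that unfolding f_def mu_def
    by (simp add: norm_mult norm_divide norm_exp_eq_Re norm_power)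
  have b1: "ennreal (cmod (integral\<^sup>L M f)) \<le> (\<integral>\<^sup>+ \<omega>. ennreal (exp (- mu * X \<omega>) * X \<omega> ^ m / fact m) \<partial>M)"
  proof (cases "integrable M f")
    case True
    then have "ennreal (cmod (integral\<^sup>L M f)) \<le> (\<integral>\<^sup>+ \<omega>. ennreal (cmod (f \<omega>)) \<partial>M)"
      by (rule integral_norm_bound_ennreal)
    also have "\<dots> = (\<integral>\<^sup>+ \<omega>. ennreal (exp (- mu * X \<omega>) * X \<omega> ^ m / fact m) \<partial>M)"
      by (rule nn_integral_cong) (simp add: nf)
    finally show ?thesis .
  next
    case False
    then show ?thesis by (simp add: not_integrable_integral_eq)
  qed
  also have "\<dots> \<le> (\<integral>\<^sup>+ \<omega>. ennreal c * ennreal (1 - erlang_CDF m mu (X \<omega>)) \<partial>M)"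
  proof (rule nn_integral_mono)
    fix \<omega> assume "\<omega> \<in> space M"
    then have "0 \<le> X \<omega>" using assms(3) by auto
    then have "exp (- mu * X \<omega>) * X \<omega> ^ m / fact m \<le> c * (1 - erlang_CDF m mu (X \<omega>))"
      unfolding c_def using mu by (rule pt_bound)
    then show "ennreal (exp (- mu * X \<omega>) * X \<omega> ^ m / fact m) \<le> ennreal c * ennreal (1 - erlang_CDF m mu (X \<omega>))"
      using c0 by (simp add: ennreal_mult'[symmetric] ennreal_leI)
  qed
  also have "\<dots> = ennreal c * (\<integral>\<^sup>+ \<omega>. ennreal (1 - erlang_CDF m mu (X \<omega>)) \<partial>M)"
    by (rule nn_integral_cmult) measurable
  also have "\<dots> = ennreal c * emeasure M {\<omega>\<in>space M. X \<omega> < Z j \<omega>}"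
    using prob_gt_indep[OF D mu I assms(3)] by simp
  also have "\<dots> = ennreal (c * P1)"
    unfolding P1_def using c0 by (simp add: emeasure_eq_measure ennreal_mult)
  finally have "cmod (integral\<^sup>L M f) \<le> c * P1"
    using c0 by (subst (asm) ennreal_le_iff) (auto simp: P1_def)
  also have "\<dots> \<le> c * max P1 P0" using c0 by (intro mult_left_mono) auto
  finally have A: "cmod (integral\<^sup>L M f) \<le> c * max P1 P0" .
  have "max P1 P0 \<le> 1" unfolding P1_def P0_def by (simp add: prob_le_1)
  then have B: "c * max P1 P0 \<le> c" using c0 by (simp add: mult_left_le)
  show ?thesis using A B unfolding L cpow P1_def P0_def by simp
qed

end
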